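(* Let $p\ne q$ be primes, $G=\mathbb{Z}_p^2\times\mathbb{Z}_q^2$, and $S\subseteq G$ with $\gcd(|S|,p^2q^2)=pq$ and $|S|\ge pq\min\{p,q\}$. Then $S$ is not spectral.
   Context: For $w=(u,v)\in G$ ($u\in\mathbb{Z}_p^2$, $v\in\mathbb{Z}_q^2$) define $\chi_w(a,b)=\exp\big(2\pi i(\tfrac{u\cdot a}{p}+\tfrac{v\cdot b}{q})\big)$ and $\chi(S)=\sum_{s\in S}\chi(s)$. $S$ is spectral if there is $\Lambda\subseteq G$ with $|\Lambda|=|S|$ and $\chi_{\lambda-\lambda'}(S)=0$ for all distinct $\lambda,\lambda'\in\Lambda$. *)

theory Defs
  imports "HOL-Analysis.Analysis" "HOL-Computational_Algebra.Primes"
begin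

text \<open>Elements of G = Z_p^2 x Z_q^2 are represented as ((a1,a2),(b1,b2)) with
  0 <= a_i < p and 0 <= b_i < q.\<close>

type_synonym elt = "(int \<times> int) \<times> (int \<times> int)"

definition Gset :: "nat \<Rightarrow> nat \<Rightarrow> elt set" where
  "Gset p q = {((a1,a2),(b1,b2)). 0 \<le> a1 \<and> a1 < int p \<and> 0 \<le> a2 \<and> a2 < int p
                \<and> 0 \<le> b1 \<and> b1 < int q \<and> 0 \<le> b2 \<and> b2 < int q}"

definition gsub :: "nat \<Rightarrow> nat \<Rightarrow> elt \<Rightarrow> elt \<Rightarrow> elt" where
  "gsub p q x y = (case x of ((a1,a2),(b1,b2)) \<Rightarrow> case y of ((c1,c2),(d1,d2)) \<Rightarrow>
      (((a1 - c1) mod int p, (a2 - c2) mod int p), ((b1 - d1) mod int q, (b2 - d2) mod int q)))"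

definition chi :: "nat \<Rightarrow> nat \<Rightarrow> elt \<Rightarrow> elt \<Rightarrow> complex" where
  "chi p q w s = (case w of ((u1,u2),(v1,v2)) \<Rightarrow> case s of ((a1,a2),(b1,b2)) \<Rightarrow>
      exp (2 * pi * \<i> * complex_of_real
        (real_of_int (u1*a1 + u2*a2) / real p + real_of_int (v1*b1 + v2*b2) / real q)))"

definition chiS :: "nat \<Rightarrow> nat \<Rightarrow> elt \<Rightarrow> elt set \<Rightarrow> complex" where
  "chiS p q w S = (\<Sum>s\<in>S. chi p q w s)"

definition spectral :: "nat \<Rightarrow> nat \<Rightarrow> elt set \<Rightarrow> bool" where
  "spectral p q S \<longleftrightarrow> (\<exists>\<Lambda>. \<Lambda> \<subseteq> Gset p q \<and> card \<Lambda> = card S \<and>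
      (\<forall>l\<in>\<Lambda>. \<forall>l'\<in>\<Lambda>. l \<noteq> l' \<longrightarrow> chiS p q (gsub p q l l') S = 0))"

end

theory Submission
  imports Defs "HOL-Computational_Algebra.Polynomial" "HOL-Computational_Algebra.Primes"
begin


definition Phi :: "nat \<Rightarrow> int poly" where
  "Phi p = (\<Sum>k<p. [:0,1:]^k)"

lemma Phi_mult: "[:-1,1:] * Phi p = [:0,1:]^p - 1"
proof -
  have "[:0,1::int:]^p - 1^p = ([:0,1:] - 1) * (\<Sum>i<p. 1^(p - Suc i) * [:0,1:]^i)"
    by (rule power_diff_sumr2)
  moreover have "[:0,1::int:] - 1 = [:-1,1:]" by (simp add: one_pCons)
  ultimately show ?thesis by (simp add: Phi_def)
qed

lemma pcompose_xpow: "pcompose ([:0,1:]^n) r = r ^ n"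
  by (induct n) (simp_all add: pcompose_mult pcompose_1 pcompose_pCons)

lemma coeff_Phi_shift:
  "coeff (pcompose (Phi p) [:1,1:]) k = int (p choose Suc k)"
proof -
  define P' where "P' = pcompose (Phi p) [:1,1:]"
  have "pcompose ([:-1,1:] * Phi p) [:1,1:] = pcompose ([:0,1:]^p - 1) [:1,1::int:]"
    by (subst Phi_mult) (rule refl)
  hence "[:0,1:] * P' = [:1,1::int:]^p - 1"
    by (simp add: P'_def pcompose_mult pcompose_diff pcompose_xpow pcompose_1 pcompose_pCons)
  hence "coeff ([:0,1:] * P') (Suc k) = coeff ([:1,1::int:]^p - 1) (Suc k)" by simp
  hence eq: "coeff P' k = coeff ([:1,1::int:]^p) (Suc k)"
    by (simp add: coeff_1)
  show ?thesis
  proof (cases "Suc k \<le> p")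
    case True
    then show ?thesis using eq coeff_linear_poly_power[OF True, of "1::int" 1] by (simp add: P'_def)
  next
    case False
    hence "coeff ([:1,1::int:]^p) (Suc k) = 0"
      by (intro coeff_eq_0) (simp add: degree_linear_power)
    then show ?thesis using eq False by (simp add: P'_def binomial_eq_0)
  qed
qed

lemma degree_Phi_shift:
  assumes "p \<ge> 1"
  shows "degree (pcompose (Phi p) [:1,1:]) = p - 1"
proof (rule antisym)
  show "degree (pcompose (Phi p) [:1,1:]) \<le> p - 1"
    by (rule degree_le) (auto simp: coeff_Phi_shift binomial_eq_0)
  show "p - 1 \<le> degree (pcompose (Phi p) [:1,1:])"
    by (rule le_degree) (use assms in \<open>simp add: coeff_Phi_shift\<close>)
qed

lemma eisenstein_Phi:
  fixes A B :: "int poly"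
  assumes p: "prime p" and e: "\<not> int p dvd e" and AB: "A * B = smult e (Phi p)"
  shows "degree A = 0 \<or> degree B = 0"
proof (rule ccontr)
  assume H: "\<not> (degree A = 0 \<or> degree B = 0)"
  define X where "X = [:1,1::int:]"
  define A' where "A' = pcompose A X"
  define B' where "B' = pcompose B X"
  define P' where "P' = pcompose (Phi p) X"
  have p1: "p \<ge> 1" using prime_gt_0_nat[OF p] by simp
  have pp: "prime (int p)" using p by simp
  have AB': "A' * B' = smult e P'"
    unfolding A'_def B'_def P'_def by (simp only: pcompose_mult[symmetric] AB pcompose_smult)
  have dX: "degree X = 1" by (simp add: X_def)
  have dA: "degree A' = degree A" and dB: "degree B' = degree B"
    by (simp_all add: A'_def B'_def degree_pcompose dX)
  have cP: "coeff P' k = int (p choose Suc k)" for k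
    by (simp add: P'_def X_def coeff_Phi_shift)
  have dP: "degree P' = p - 1" using degree_Phi_shift[OF p1] by (simp add: P'_def X_def)
  have e0: "e \<noteq> 0" using e by auto
  have A0: "A' \<noteq> 0" and B0: "B' \<noteq> 0" using H dA dB by auto
  have dsum: "degree A' + degree B' = p - 1"
  proof -
    have "degree (A' * B') = degree A' + degree B'" by (rule degree_mult_eq[OF A0 B0])
    then show ?thesis using AB' e0 dP by simp
  qed
  have lead: "coeff A' (degree A') * coeff B' (degree B') = e"
    using coeff_mult_degree_sum[of A' B'] AB' dsum cP[of "p-1"] p1 by simp
  have nA: "\<not> int p dvd coeff A' (degree A')" using lead e by (metis dvd_mult2)
  have nB: "\<not> int p dvd coeff B' (degree B')" using lead e by (metis dvd_mult)
  define i where "i = (LEAST i. \<not> int p dvd coeff A' i)"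
  define j where "j = (LEAST j. \<not> int p dvd coeff B' j)"
  have i1: "\<not> int p dvd coeff A' i" unfolding i_def by (rule LeastI, rule nA)
  have i2: "i \<le> degree A'" unfolding i_def by (rule Least_le, rule nA)
  have i3: "\<And>k. k < i \<Longrightarrow> int p dvd coeff A' k" unfolding i_def using not_less_Least by blast
  have j1: "\<not> int p dvd coeff B' j" unfolding j_def by (rule LeastI, rule nB)
  have j2: "j \<le> degree B'" unfolding j_def by (rule Least_le, rule nB)
  have j3: "\<And>k. k < j \<Longrightarrow> int p dvd coeff B' k" unfolding j_def using not_less_Least by blast
  have "coeff (A' * B') (i + j) = (\<Sum>k\<le>i+j. coeff A' k * coeff B' (i + j - k))"
    by (rule coeff_mult)
  also have "\<dots> = coeff A' i * coeff B' (i + j - i) + (\<Sum>k\<in>{..i+j} - {i}. coeff A' k * coeff B' (i + j - k))"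
    by (subst sum.remove[of _ i]) auto
  finally have cs: "coeff (A' * B') (i + j) = coeff A' i * coeff B' j + (\<Sum>k\<in>{..i+j} - {i}. coeff A' k * coeff B' (i + j - k))"
    by simp
  have "int p dvd (\<Sum>k\<in>{..i+j} - {i}. coeff A' k * coeff B' (i + j - k))"
  proof (rule dvd_sum)
    fix k assume "k \<in> {..i+j} - {i}"
    then consider "k < i" | "k > i" "k \<le> i + j" by force
    then show "int p dvd coeff A' k * coeff B' (i + j - k)"
    proof cases
      case 1 then show ?thesis using i3 by simp
    next
      case 2 then have "i + j - k < j" by simp
      then show ?thesis using j3 by simp
    qed
  qed
  moreover have "\<not> int p dvd coeff A' i * coeff B' j"
    using i1 j1 pp prime_dvd_mult_iff by blast
  ultimately have nd: "\<not> int p dvd coeff (A' * B') (i + j)"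
    using cs by (metis dvd_add_left_iff)
  have ij: "i + j \<ge> p - 1"
  proof (rule ccontr)
    assume "\<not> i + j \<ge> p - 1"
    hence "Suc (i + j) < p" "Suc (i+j) \<noteq> 0" by auto
    hence "p dvd (p choose Suc (i+j))" using dvd_choose_prime p by auto
    hence "int p dvd coeff (A' * B') (i + j)" using AB' cP
      by (simp add: int_dvd_int_iff)
    thus False using nd by simp
  qed
  hence "i = degree A'" "j = degree B'" using i2 j2 dsum by auto
  hence "i > 0" "j > 0" using H dA dB by auto
  hence "int p dvd coeff A' 0" "int p dvd coeff B' 0" using i3 j3 by auto
  hence "int p * int p dvd coeff A' 0 * coeff B' 0" by (rule mult_dvd_mono)
  moreover have "coeff A' 0 * coeff B' 0 = e * int p"
  proof -
    have "coeff (A' * B') 0 = coeff A' 0 * coeff B' 0" by (simp add: coeff_mult)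
    then show ?thesis using AB' cP[of 0] by simp
  qed
  ultimately have "int p * int p dvd e * int p" by simp
  hence "int p dvd e" using p1 by (subst (asm) dvd_times_right_cancel_iff) auto
  thus False using e by simp
qed



definition zeta :: "nat \<Rightarrow> complex" where "zeta p = exp (2 * pi * \<i> / of_nat p)"
definition evz :: "nat \<Rightarrow> int poly \<Rightarrow> complex" where
  "evz p P = poly (map_poly of_int P) (zeta p)"

lemma map_poly_of_int_add:
  "map_poly (of_int :: int \<Rightarrow> 'a::comm_ring_1) (P + Q) = map_poly of_int P + map_poly of_int Q"
  by (rule poly_eqI) (simp add: coeff_map_poly)

lemma map_poly_of_int_diff:
  "map_poly (of_int :: int \<Rightarrow> 'a::comm_ring_1) (P - Q) = map_poly of_int P - map_poly of_int Q"
  by (rule poly_eqI) (simp add: coeff_map_poly)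

lemma map_poly_of_int_mult:
  "map_poly (of_int :: int \<Rightarrow> 'a::comm_ring_1) (P * Q) = map_poly of_int P * map_poly of_int Q"
  by (rule poly_eqI) (simp add: coeff_map_poly coeff_mult)

lemma map_poly_of_int_smult:
  "map_poly (of_int :: int \<Rightarrow> 'a::comm_ring_1) (smult c P) = smult (of_int c) (map_poly of_int P)"
  by (rule poly_eqI) (simp add: coeff_map_poly)

lemma evz_add: "evz p (P + Q) = evz p P + evz p Q"
  by (simp add: evz_def map_poly_of_int_add)
lemma evz_diff: "evz p (P - Q) = evz p P - evz p Q"
  by (simp add: evz_def map_poly_of_int_diff)
lemma evz_mult: "evz p (P * Q) = evz p P * evz p Q"
  by (simp add: evz_def map_poly_of_int_mult)
lemma evz_smult: "evz p (smult c P) = of_int c * evz p P"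
  by (simp add: evz_def map_poly_of_int_smult)
lemma evz_const: "evz p [:c:] = of_int c"
  by (simp add: evz_def map_poly_pCons)
lemma evz_one: "evz p 1 = 1"
  by (simp add: evz_def)
lemma evz_x: "evz p [:0,1:] = zeta p"
  by (simp add: evz_def map_poly_pCons)
lemma evz_power: "evz p (P ^ n) = evz p P ^ n"
  by (induct n) (simp_all add: evz_one evz_mult)

lemma poly_as_sum_lt:
  fixes P :: "'a::comm_ring_1 poly"
  assumes "degree P < n"
  shows "poly P x = (\<Sum>i<n. coeff P i * x ^ i)"
proof -
  have "poly P x = (\<Sum>i\<le>degree P. coeff P i * x ^ i)" by (rule poly_altdef)
  also have "\<dots> = (\<Sum>i<n. coeff P i * x ^ i)"
    by (rule sum.mono_neutral_left) (use assms in \<open>auto simp: coeff_eq_0\<close>)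
  finally show ?thesis .
qed

lemma evz_sum_lt:
  assumes "degree P < n"
  shows "evz p P = (\<Sum>i<n. of_int (coeff P i) * zeta p ^ i)"
proof -
  have "degree (map_poly (of_int :: int \<Rightarrow> complex) P) < n"
    using map_poly_degree_leq[of "of_int :: int \<Rightarrow> complex" P] assms by linarith
  then show ?thesis unfolding evz_def by (subst poly_as_sum_lt) (auto simp: coeff_map_poly)
qed

lemma zeta_pow: "p > 0 \<Longrightarrow> zeta p ^ p = 1"
proof -
  assume "p > 0"
  have "zeta p ^ p = exp (of_nat p * (2 * pi * \<i> / of_nat p))"
    unfolding zeta_def by (rule exp_of_nat_mult[symmetric])
  also have "of_nat p * (2 * pi * \<i> / of_nat p) = 2 * pi * \<i>" using \<open>p > 0\<close> by simp
  finally show ?thesis by simp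
qed

lemma zeta_ne1: "p \<ge> 2 \<Longrightarrow> zeta p \<noteq> 1"
proof
  assume p: "p \<ge> 2" and z: "zeta p = 1"
  then obtain n :: int where n: "Im (2 * pi * \<i> / of_nat p) = of_int (2 * n) * pi"
    unfolding zeta_def exp_eq_1 by blast
  have "Im (2 * pi * \<i> / of_nat p) = 2 * pi / real p"
    by (simp add: Im_divide_of_nat)
  with n have "2 * pi / real p = 2 * of_int n * pi" by simp
  hence "2 * pi = 2 * of_int n * pi * real p" using p by (simp add: field_simps)
  hence "real p * of_int n = 1" using pi_gt_zero by (simp add: algebra_simps)
  hence "int p * n = 1" by (metis of_int_eq_1_iff of_int_mult of_int_of_nat_eq)
  hence "int p = 1 \<or> int p = -1" by (simp add: zmult_eq_1_iff)
  thus False using p by simp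
qed

lemma sum_zeta: "p \<ge> 2 \<Longrightarrow> (\<Sum>k<p. zeta p ^ k) = 0"
  using zeta_pow[of p] zeta_ne1[of p] by (simp add: sum_gp_strict)

lemma evz_Phi: "p \<ge> 2 \<Longrightarrow> evz p (Phi p) = 0"
proof -
  assume p: "p \<ge> 2"
  have "evz p ([:-1,1:] * Phi p) = evz p ([:0,1:]^p - 1)" by (simp only: Phi_mult)
  moreover have "evz p ([:-1,1:] * Phi p) = evz p [:-1,1:] * evz p (Phi p)" by (rule evz_mult)
  moreover have "evz p [:-1,1:] = zeta p - 1" by (simp add: evz_def map_poly_pCons)
  moreover have "evz p ([:0,1:]^p - 1) = zeta p ^ p - 1" by (simp only: evz_diff evz_power evz_x evz_one)
  ultimately have "(zeta p - 1) * evz p (Phi p) = zeta p ^ p - 1" by simp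
  hence "(zeta p - 1) * evz p (Phi p) = 0" using zeta_pow[of p] p by simp
  thus ?thesis using zeta_ne1[OF p] by simp
qed

lemma content_Phi: "p \<ge> 1 \<Longrightarrow> content (Phi p) = 1"
proof -
  assume p: "p \<ge> 1"
  have "coeff (Phi p) 0 = poly (Phi p) 0" by (simp add: poly_0_coeff_0)
  also have "\<dots> = (\<Sum>k<p. (0::int) ^ k)" by (simp add: Phi_def poly_sum)
  also have "\<dots> = 1" using p by (simp add: zero_power sum.remove[of "{..<p}" 0] lessThan_iff)
  finally have "content (Phi p) dvd 1" using content_dvd_coeff[of "Phi p" 0] by simp
  hence u: "normalize (content (Phi p)) = 1" using is_unit_normalize by blast
  have "content (Phi p) = normalize (content (Phi p))" by (simp only: normalize_content)
  also have "\<dots> = 1" by (rule u)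
  finally show ?thesis .
qed


lemma degree_Phi: "p \<ge> 1 \<Longrightarrow> degree (Phi p) = p - 1"
  using degree_Phi_shift[of p] by (simp add: degree_pcompose)

lemma cyc_nonvanish:
  assumes p: "prime p" and P0: "P \<noteq> 0" and dP: "degree P < p - 1"
  shows "evz p P \<noteq> 0"
proof
  assume Z: "evz p P = 0"
  have p2: "p \<ge> 2" using prime_ge_2_nat[OF p] .
  define D where "D = {d. \<exists>M. M \<noteq> 0 \<and> degree M = d \<and> evz p M = 0}"
  have PD: "degree P \<in> D" using P0 Z unfolding D_def by blast
  define d0 where "d0 = (LEAST d. d \<in> D)"
  have d0D: "d0 \<in> D" unfolding d0_def by (rule LeastI, rule PD)
  have d0le: "d0 \<le> degree P" unfolding d0_def by (rule Least_le, rule PD)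
  have d0min: "\<And>d. d < d0 \<Longrightarrow> d \<notin> D" unfolding d0_def using not_less_Least by blast
  obtain M where M0: "M \<noteq> 0" and dM: "degree M = d0" and eM: "evz p M = 0"
    using d0D unfolding D_def by blast
  have d0pos: "d0 \<noteq> 0"
  proof
    assume "d0 = 0"
    then obtain a where Ma: "M = [:a:]" using dM by (metis degree_eq_zeroE)
    hence "a \<noteq> 0" using M0 by simp
    moreover have "evz p M = of_int a" using Ma by (simp add: evz_const)
    ultimately show False using eM by simp
  qed
  obtain Q r where qr: "pseudo_divmod (Phi p) M = (Q, r)" by (metis surj_pair)
  define c where "c = coeff M (degree M) ^ (Suc (degree (Phi p)) - degree M)"
  have eq: "smult c (Phi p) = M * Q + r" unfolding c_def by (rule pseudo_divmod(1)[OF M0 qr])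
  have rdeg: "r = 0 \<or> degree r < degree M" by (rule pseudo_divmod(2)[OF M0 qr])
  have c0: "c \<noteq> 0" unfolding c_def using M0 by simp
  have "evz p (smult c (Phi p)) = evz p (M * Q + r)" using eq by simp
  hence "evz p r = 0" by (simp add: evz_smult evz_Phi[OF p2] evz_add evz_mult eM)
  have r0: "r = 0"
  proof (rule ccontr)
    assume "r \<noteq> 0"
    hence "degree r \<in> D" using \<open>evz p r = 0\<close> unfolding D_def by blast
    moreover have "degree r < d0" using rdeg \<open>r \<noteq> 0\<close> dM by simp
    ultimately show False using d0min by blast
  qed
  have eq2: "M * Q = smult c (Phi p)" using eq r0 by simp
  have p1: "p \<ge> 1" using p2 by simp
  have Phi0: "Phi p \<noteq> 0" using content_Phi[OF p1] by auto
  have Q0: "Q \<noteq> 0" using eq2 c0 Phi0 by auto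
  have "degree (M * Q) = degree M + degree Q" by (rule degree_mult_eq[OF M0 Q0])
  hence dsum: "degree M + degree Q = p - 1" using eq2 c0 degree_Phi[OF p1] by simp
  have "primitive_part (M * Q) = primitive_part (smult c (Phi p))" using eq2 by simp
  hence pp: "primitive_part M * primitive_part Q = smult (sgn c) (Phi p)"
    by (simp add: primitive_part_mult primitive_part_smult primitive_part_prim content_Phi[OF p1])
  have "\<not> int p dvd sgn c"
  proof
    assume "int p dvd sgn c"
    hence "int p dvd 1 \<or> int p dvd -1" using c0 by (cases "c > 0") auto
    thus False using p2 by auto
  qed
  from eisenstein_Phi[OF p this pp]
  have "degree M = 0 \<or> degree Q = 0" by simp
  thus False using d0pos dM dsum d0le dP by auto
qed

lemma cyc_const:
  assumes p: "prime p" and S: "(\<Sum>k<p. of_int (c k) * zeta p ^ k) = 0" and k: "k < p"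
  shows "c k = c (p - 1)"
proof -
  have p2: "p \<ge> 2" using prime_ge_2_nat[OF p] .
  define P where "P = (\<Sum>i<p-1. monom (c i - c (p - 1)) i)"
  have cP: "coeff P i = (if i < p - 1 then c i - c (p - 1) else 0)" for i
    unfolding P_def by (simp add: coeff_sum coeff_monom)
  have dP: "degree P \<le> p - 2"
    by (rule degree_le) (auto simp: cP)
  have "evz p P = (\<Sum>i<p. of_int (coeff P i) * zeta p ^ i)"
    by (rule evz_sum_lt) (use dP p2 in linarith)
  also have "\<dots> = (\<Sum>i<p. of_int (c i - c (p - 1)) * zeta p ^ i)"
  proof (rule sum.cong)
    fix i assume "i \<in> {..<p}"
    then show "of_int (coeff P i) * zeta p ^ i = of_int (c i - c (p - 1)) * zeta p ^ i"
    proof (cases "i < p - 1")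
      case True then show ?thesis by (simp add: cP)
    next
      case False
      with \<open>i \<in> {..<p}\<close> have "i = p - 1" by auto
      then show ?thesis by (simp add: cP)
    qed
  qed simp
  also have "\<dots> = (\<Sum>i<p. of_int (c i) * zeta p ^ i) - of_int (c (p - 1)) * (\<Sum>i<p. zeta p ^ i)"
    by (simp add: algebra_simps sum_subtractf sum_distrib_left sum_distrib_right)
  also have "\<dots> = 0" using S sum_zeta[OF p2] by simp
  finally have "evz p P = 0" .
  hence "P = 0" using cyc_nonvanish[OF p] dP p2 by fastforce
  hence "coeff P k = 0" by simp
  show ?thesis
  proof (cases "k < p - 1")
    case True then show ?thesis using cP[of k] \<open>coeff P k = 0\<close> by simp
  next
    case False with k have "k = p - 1" by simp
    then show ?thesis by simp
  qed
qed


lemma exp_zeta: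
  assumes r: "r > 0"
  shows "exp (2 * pi * \<i> * complex_of_real (real_of_int X / real r)) = zeta r ^ nat (X mod int r)"
proof -
  define m where "m = nat (X mod int r)"
  define d where "d = X div int r"
  have Xeq: "X = int r * d + int m" using r unfolding m_def d_def by simp
  have "2 * pi * \<i> * complex_of_real (real_of_int X / real r)
        = (2 * of_int d * pi) * \<i> + of_nat m * (2 * pi * \<i> / of_nat r)"
    using r by (simp add: Xeq field_simps)
  hence "exp (2 * pi * \<i> * complex_of_real (real_of_int X / real r))
        = exp ((2 * of_int d * pi) * \<i>) * exp (of_nat m * (2 * pi * \<i> / of_nat r))"
    by (simp add: exp_add)
  also have "exp ((2 * of_int d * pi) * \<i>) = 1" by (rule exp_integer_2pi) simp
  also have "exp (of_nat m * (2 * pi * \<i> / of_nat r)) = zeta r ^ m"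
    unfolding zeta_def by (rule exp_of_nat_mult)
  finally show ?thesis by (simp add: m_def)
qed

lemma uniform_of_vanish:
  fixes T :: "'b set" and g G :: "'b \<Rightarrow> int" and c :: int
  assumes r: "prime r" and T: "finite T" and c: "\<not> int r dvd c"
    and GG: "\<And>s. s \<in> T \<Longrightarrow> G s mod int r = (c * g s) mod int r"
    and V: "(\<Sum>s\<in>T. exp (2 * pi * \<i> * complex_of_real (real_of_int (G s) / real r))) = 0"
  shows "r * card {s\<in>T. g s mod int r = k mod int r} = card T"
proof -
  have r0: "r > 0" using prime_gt_0_nat[OF r] .
  have rp: "prime (int r)" using r by simp
  define h where "h s = nat (G s mod int r)" for s
  define N where "N k = int (card {s\<in>T. h s = k})" for k
  have hr: "h s < r" for s unfolding h_def using r0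
    by (simp add: nat_less_iff)
  have "(\<Sum>s\<in>T. exp (2 * pi * \<i> * complex_of_real (real_of_int (G s) / real r)))
        = (\<Sum>s\<in>T. zeta r ^ h s)"
    unfolding h_def by (intro sum.cong refl exp_zeta[OF r0])
  also have "\<dots> = (\<Sum>k<r. (\<Sum>s\<in>{s\<in>T. h s = k}. zeta r ^ h s))"
    by (rule sum.group[symmetric]) (use T hr in auto)
  also have "\<dots> = (\<Sum>k<r. of_int (N k) * zeta r ^ k)"
    by (rule sum.cong) (simp_all add: N_def)
  finally have S0: "(\<Sum>k<r. of_int (N k) * zeta r ^ k) = 0" using V by simp
  have Nc: "N k = N (r - 1)" if "k < r" for k by (rule cyc_const[OF r S0 that])
  have "card T = (\<Sum>k<r. card {s\<in>T. h s = k})"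
  proof -
    have "h ` T \<subseteq> {..<r}" using hr by auto
    then show ?thesis using sum.group[OF T, of "{..<r}" h "\<lambda>_. (1::nat)"] by simp
  qed
  hence "int (card T) = (\<Sum>k<r. N k)" by (simp add: N_def)
  also have "\<dots> = (\<Sum>k<r. N (r - 1))" by (rule sum.cong[OF refl], rule Nc, simp)
  finally have cT: "int (card T) = int r * N (r - 1)" by simp
  define k' where "k' = nat ((c * k) mod int r)"
  have "{s\<in>T. g s mod int r = k mod int r} = {s\<in>T. h s = k'}"
  proof (rule Collect_cong, rule conj_cong[OF refl])
    fix s assume sT: "s \<in> T"
    have "h s = k' \<longleftrightarrow> G s mod int r = (c * k) mod int r"
      unfolding h_def k'_def using r0 by (auto simp: nat_eq_iff2)
    also have "\<dots> \<longleftrightarrow> (c * g s) mod int r = (c * k) mod int r" using GG[OF sT] by simp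
    also have "\<dots> \<longleftrightarrow> int r dvd c * (g s - k)" by (simp add: mod_eq_dvd_iff algebra_simps)
    also have "\<dots> \<longleftrightarrow> int r dvd (g s - k)" using rp c by (simp add: prime_dvd_mult_iff)
    also have "\<dots> \<longleftrightarrow> g s mod int r = k mod int r" by (simp add: mod_eq_dvd_iff)
    finally show "(g s mod int r = k mod int r) = (h s = k')" by simp
  qed
  moreover have "k' < r" unfolding k'_def using r0 by (simp add: nat_less_iff)
  ultimately have "int (card {s\<in>T. g s mod int r = k mod int r}) = N (r - 1)"
    using Nc[of k'] unfolding N_def by simp
  with cT have "int (r * card {s\<in>T. g s mod int r = k mod int r}) = int (card T)" by simp
  thus ?thesis by (simp only: of_nat_eq_iff)
qed


lemma count_t:
  fixes a b :: int
  assumes r: "prime r"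
  shows "card {t\<in>{0..<int r}. (a + t * b) mod int r = 0}
         = (if b mod int r \<noteq> 0 then 1 else if a mod int r = 0 then r else 0)"
proof -
  have rp: "prime (int r)" using r by simp
  have r0: "int r > 0" using prime_gt_0_nat[OF r] by simp
  show ?thesis
  proof (cases "b mod int r = 0")
    case True
    have "(a + t * b) mod int r = a mod int r" for t
    proof -
      have "int r dvd b" using True by (simp add: dvd_eq_mod_eq_0)
      hence "int r dvd t * b" by simp
      thus ?thesis by (simp add: mod_add_right_eq[symmetric] dvd_eq_mod_eq_0 mod_add_eq[symmetric])
    qed
    hence "{t\<in>{0..<int r}. (a + t * b) mod int r = 0} = (if a mod int r = 0 then {0..<int r} else {})"
      by auto
    then show ?thesis using True by simp
  next
    case False
    hence nd: "\<not> int r dvd b" by (simp add: dvd_eq_mod_eq_0)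
    have "coprime (int r) b" using prime_imp_coprime[OF rp nd] .
    hence "coprime b (int r)" by (simp only: coprime_commute)
    hence "gcd b (int r) = 1" by (simp only: coprime_iff_gcd_eq_1)
    then obtain u v where uv: "u * b + v * int r = 1" using bezout_int[of b "int r"] by auto
    define t0 where "t0 = (- a * u) mod int r"
    have t0r: "t0 \<in> {0..<int r}" unfolding t0_def using r0 by simp
    have t0s: "(a + t0 * b) mod int r = 0"
    proof -
      have m1: "(t0 * b) mod int r = ((- a * u) * b) mod int r"
        unfolding t0_def by (rule mod_mult_left_eq)
      have "(a + t0 * b) mod int r = (a + (t0 * b) mod int r) mod int r"
        by (simp only: mod_add_right_eq)
      also have "\<dots> = (a + ((- a * u) * b) mod int r) mod int r" by (simp only: m1)
      also have "\<dots> = (a + (- a * u) * b) mod int r" by (simp only: mod_add_right_eq)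
      finally have "(a + t0 * b) mod int r = (a + (- a * u) * b) mod int r" .
      also have "a + (- a * u) * b = a * (1 - u * b)" by (simp add: algebra_simps)
      also have "\<dots> = a * v * int r"
      proof -
        have "1 - u * b = v * int r" using uv by (simp add: diff_eq_eq)
        then show ?thesis by simp
      qed
      finally show ?thesis by simp
    qed
    have uniq: "t = t0" if t: "t \<in> {0..<int r}" "(a + t * b) mod int r = 0" for t
    proof -
      have d1: "int r dvd (a + t * b)" using t(2) by (simp add: dvd_eq_mod_eq_0)
      have d2: "int r dvd (a + t0 * b)" using t0s by (simp add: dvd_eq_mod_eq_0)
      have "int r dvd (a + t * b) - (a + t0 * b)" using dvd_diff[OF d1 d2] .
      hence "int r dvd (t - t0) * b" by (simp add: algebra_simps)
      hence "int r dvd (t - t0)" using rp nd by (simp add: prime_dvd_mult_iff)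
      hence "t mod int r = t0 mod int r" by (simp only: mod_eq_dvd_iff)
      moreover have "t mod int r = t" using t(1) by (simp add: mod_pos_pos_trivial)
      moreover have "t0 mod int r = t0" using t0r by (simp add: mod_pos_pos_trivial)
      ultimately show ?thesis by simp
    qed
    have "{t\<in>{0..<int r}. (a + t * b) mod int r = 0} = {t0}"
    proof (intro equalityI subsetI)
      fix t assume "t \<in> {t\<in>{0..<int r}. (a + t * b) mod int r = 0}"
      hence "t \<in> {0..<int r}" "(a + t * b) mod int r = 0" by auto
      from uniq[OF this] show "t \<in> {t0}" by simp
    next
      fix t assume "t \<in> {t0}"
      thus "t \<in> {t\<in>{0..<int r}. (a + t * b) mod int r = 0}" using t0r t0s by simp
    qed
    then show ?thesis using False by simp
  qed
qed

lemma card_filter_sum: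
  "finite T \<Longrightarrow> card {s\<in>T. P s} = (\<Sum>s\<in>T. if P s then 1 else 0)"
  by (simp add: sum.inter_filter[symmetric])

lemma sq_dvd_of_uniform:
  fixes T :: "'b set" and h1 h2 :: "'b \<Rightarrow> int"
  assumes r: "prime r" and T: "finite T"
    and U2: "\<And>k. r * card {s\<in>T. h2 s mod int r = k mod int r} = card T"
    and U1: "\<And>t k. 0 \<le> t \<Longrightarrow> t < int r \<Longrightarrow>
              r * card {s\<in>T. (h1 s + t * h2 s) mod int r = k mod int r} = card T"
  shows "r^2 dvd card T"
proof -
  have r0: "r > 0" using prime_gt_0_nat[OF r] .
  define A where "A = card {s\<in>T. h2 s mod int r = 0}"
  define B where "B = card {s\<in>T. h1 s mod int r = 0 \<and> h2 s mod int r = 0}"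
  define C where "C = card {s\<in>T. h2 s mod int r \<noteq> 0}"
  have rA: "r * A = card T" using U2[of 0] unfolding A_def by simp
  have AC: "A + C = card T"
  proof -
    have "card T = card ({s\<in>T. h2 s mod int r = 0} \<union> {s\<in>T. h2 s mod int r \<noteq> 0})"
      by (rule arg_cong[where f=card]) auto
    also have "\<dots> = A + C" unfolding A_def C_def
      by (rule card_Un_disjoint) (use T in auto)
    finally show ?thesis by simp
  qed
  have ct: "card {s\<in>T. (h1 s + t * h2 s) mod int r = 0} = A" if "t \<in> {0..<int r}" for t
  proof -
    have "r * card {s\<in>T. (h1 s + t * h2 s) mod int r = 0} = r * A"
      using U1[of t 0] that rA by simp
    thus ?thesis using r0 by simp
  qed
  have "(\<Sum>t\<in>{0..<int r}. card {s\<in>T. (h1 s + t * h2 s) mod int r = 0}) = (\<Sum>t\<in>{0..<int r}. A)"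
    by (rule sum.cong[OF refl], rule ct)
  hence L: "(\<Sum>t\<in>{0..<int r}. card {s\<in>T. (h1 s + t * h2 s) mod int r = 0}) = r * A"
    by simp
  have "(\<Sum>t\<in>{0..<int r}. card {s\<in>T. (h1 s + t * h2 s) mod int r = 0})
      = (\<Sum>t\<in>{0..<int r}. \<Sum>s\<in>T. if (h1 s + t * h2 s) mod int r = 0 then 1 else 0)"
    by (rule sum.cong[OF refl], rule card_filter_sum[OF T])
  also have "\<dots> = (\<Sum>s\<in>T. \<Sum>t\<in>{0..<int r}. if (h1 s + t * h2 s) mod int r = 0 then 1 else 0)"
    by (rule sum.swap)
  also have "\<dots> = (\<Sum>s\<in>T. card {t\<in>{0..<int r}. (h1 s + t * h2 s) mod int r = 0})"
    by (rule sum.cong[OF refl], rule card_filter_sum[symmetric]) simp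
  also have "\<dots> = (\<Sum>s\<in>T. (if h2 s mod int r \<noteq> 0 then 1 else 0)
                       + r * (if h1 s mod int r = 0 \<and> h2 s mod int r = 0 then 1 else 0))"
    by (rule sum.cong[OF refl]) (subst count_t[OF r], simp)
  also have "\<dots> = C + r * B"
    unfolding C_def B_def
    by (simp add: sum.distrib sum_distrib_left card_filter_sum[OF T])
  finally have "r * A = C + r * B" using L by simp
  hence "r * A + A = card T + r * B" using AC by linarith
  hence AB: "A = r * B" using rA by linarith
  have "card T = r * (r * B)" using rA unfolding AB by simp
  hence "card T = r^2 * B" by (simp add: power2_eq_square)
  thus ?thesis by simp
qed



lemma mod_lin: "((x mod m) * a + (y mod m) * b) mod m = (x * a + y * b) mod (m::int)"
proof -
  have "((x mod m) * a + (y mod m) * b) mod m = (((x mod m) * a) mod m + ((y mod m) * b) mod m) mod m"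
    by (rule mod_add_eq[symmetric])
  also have "\<dots> = ((x * a) mod m + (y * b) mod m) mod m" by (simp only: mod_mult_left_eq)
  also have "\<dots> = (x * a + y * b) mod m" by (rule mod_add_eq)
  finally show ?thesis .
qed

lemma mod_range_eq:
  fixes x y m :: int
  assumes "0 \<le> x" "x < m" "0 \<le> y" "y < m" "x mod m = y mod m"
  shows "x = y"
  using assms by simp

lemma chi_p:
  "chi p q ((u1,u2),(0,0)) s =
     exp (2 * pi * \<i> * complex_of_real (real_of_int (u1 * fst (fst s) + u2 * snd (fst s)) / real p))"
  by (cases s) (auto simp: chi_def)

lemma Gset_finite: "finite (Gset p q)"
proof -
  have "Gset p q \<subseteq> ({0..<int p} \<times> {0..<int p}) \<times> ({0..<int q} \<times> {0..<int q})"
    by (auto simp: Gset_def)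
  thus ?thesis by (rule finite_subset) auto
qed

lemma uniform_dir:
  assumes p: "prime p" and S: "finite S"
    and c: "1 \<le> c" "c < int p"
    and V: "chiS p q (((c * e1) mod int p, (c * e2) mod int p), (0, 0)) S = 0"
  shows "p * card {s\<in>S. (e1 * fst (fst s) + e2 * snd (fst s)) mod int p = k mod int p} = card S"
proof (rule uniform_of_vanish[OF p S, where c = c and G = "\<lambda>s. ((c * e1) mod int p) * fst (fst s) + ((c * e2) mod int p) * snd (fst s)"])
  show "\<not> int p dvd c"
  proof
    assume "int p dvd c"
    hence "int p \<le> c" using c by (simp add: zdvd_imp_le)
    thus False using c by simp
  qed
next
  fix s
  show "((c * e1) mod int p * fst (fst s) + (c * e2) mod int p * snd (fst s)) mod int p =
        (c * (e1 * fst (fst s) + e2 * snd (fst s))) mod int p"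
    by (simp only: mod_lin) (simp add: algebra_simps)
next
  show "(\<Sum>s\<in>S. exp (2 * pi * \<i> * complex_of_real (real_of_int ((c * e1) mod int p * fst (fst s) + (c * e2) mod int p * snd (fst s)) / real p))) = 0"
  proof -
    have "(\<Sum>s\<in>S. exp (2 * pi * \<i> * complex_of_real (real_of_int ((c * e1) mod int p * fst (fst s) + (c * e2) mod int p * snd (fst s)) / real p)))
        = (\<Sum>s\<in>S. chi p q (((c * e1) mod int p, (c * e2) mod int p), (0, 0)) s)"
      by (rule sum.cong[OF refl]) (rule chi_p[symmetric])
    also have "\<dots> = 0" using V by (simp add: chiS_def)
    finally show ?thesis .
  qed
qed


lemma mod_dvd_range_eq:
  fixes x y m :: int
  assumes "0 \<le> x" "x < m" "0 \<le> y" "y < m" "m dvd (x - y)"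
  shows "x = y"
proof -
  have "x mod m = y mod m" using assms(5) by (simp add: mod_eq_dvd_iff)
  thus ?thesis using assms(1-4) by simp
qed

lemma good_dir:
  assumes p: "prime p" and S: "finite S" and nd: "\<not> p^2 dvd card S"
  obtains e1 e2 where "(e1 = 0 \<and> e2 = 1) \<or> (e1 = 1 \<and> 0 \<le> e2 \<and> e2 < int p)"
    and "\<And>c. 1 \<le> c \<Longrightarrow> c < int p \<Longrightarrow> chiS p q (((c * e1) mod int p, (c * e2) mod int p), (0, 0)) S \<noteq> 0"
proof -
  have "\<exists>e1 e2. ((e1 = 0 \<and> e2 = 1) \<or> (e1 = 1 \<and> 0 \<le> e2 \<and> e2 < int p)) \<and>
          (\<forall>c. 1 \<le> c \<and> c < int p \<longrightarrow> chiS p q (((c * e1) mod int p, (c * e2) mod int p), (0, 0)) S \<noteq> 0)"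
  proof (rule ccontr)
    assume H: "\<not> ?thesis"
    have U: "p * card {s\<in>S. (e1 * fst (fst s) + e2 * snd (fst s)) mod int p = k mod int p} = card S"
      if "(e1 = 0 \<and> e2 = 1) \<or> (e1 = 1 \<and> 0 \<le> e2 \<and> e2 < int p)" for e1 e2 k
    proof -
      from H that obtain c where "1 \<le> c" "c < int p"
        "chiS p q (((c * e1) mod int p, (c * e2) mod int p), (0, 0)) S = 0" by blast
      then show ?thesis by (rule uniform_dir[OF p S])
    qed
    have U2: "p * card {s\<in>S. snd (fst s) mod int p = k mod int p} = card S" for k
      using U[of 0 1 k] by simp
    have U1: "p * card {s\<in>S. (fst (fst s) + t * snd (fst s)) mod int p = k mod int p} = card S"
      if "0 \<le> t" "t < int p" for t k :: int
      using U[of 1 t k] that by (simp add: mult.commute)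
    have "p^2 dvd card S" by (rule sq_dvd_of_uniform[OF p S U2 U1])
    thus False using nd by simp
  qed
  thus ?thesis using that by blast
qed

lemma elt_cases: obtains a1 a2 b1 b2 where "(l::elt) = ((a1, a2), (b1, b2))"
  by (metis prod.collapse)

lemma side_bound:
  assumes p: "prime p" and q: "q > 0" and S: "finite S" and nd: "\<not> p^2 dvd card S"
    and L: "\<Lambda> \<subseteq> Gset p q"
    and orth: "\<forall>l\<in>\<Lambda>. \<forall>l'\<in>\<Lambda>. l \<noteq> l' \<longrightarrow> chiS p q (gsub p q l l') S = 0"
  shows "card \<Lambda> \<le> p * q^2"
proof -
  have p0: "int p > 0" using prime_gt_0_nat[OF p] by simp
  obtain e1 e2 where dir: "(e1 = 0 \<and> e2 = 1) \<or> (e1 = 1 \<and> 0 \<le> e2 \<and> e2 < int p)"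
    and nz: "\<And>c. 1 \<le> c \<Longrightarrow> c < int p \<Longrightarrow> chiS p q (((c * e1) mod int p, (c * e2) mod int p), (0, 0)) S \<noteq> 0"
    using good_dir[OF p S nd] by blast
  define F where "F l = ((e1 * snd (fst l) - e2 * fst (fst l)) mod int p, snd l)" for l :: elt
  have Fin: "F ` \<Lambda> \<subseteq> {0..<int p} \<times> ({0..<int q} \<times> {0..<int q})"
    using L p0 by (auto simp: F_def Gset_def)
  have inj: "inj_on F \<Lambda>"
  proof (rule inj_onI)
    fix l l' assume l: "l \<in> \<Lambda>" and l': "l' \<in> \<Lambda>" and FF: "F l = F l'"
    show "l = l'"
    proof (rule ccontr)
      assume ne: "l \<noteq> l'"
      obtain a1 a2 b1 b2 where ld: "l = ((a1, a2), (b1, b2))" by (rule elt_cases)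
      obtain a1' a2' b1' b2' where ld': "l' = ((a1', a2'), (b1', b2'))" by (rule elt_cases)
      have rg: "0 \<le> a1" "a1 < int p" "0 \<le> a2" "a2 < int p" "0 \<le> a1'" "a1' < int p" "0 \<le> a2'" "a2' < int p"
        using L l l' by (auto simp: Gset_def ld ld')
      have bb: "b1 = b1'" "b2 = b2'" using FF by (simp_all add: F_def ld ld')
      have FF1: "(e1 * a2 - e2 * a1) mod int p = (e1 * a2' - e2 * a1') mod int p"
        using FF by (simp add: F_def ld ld')
      hence dv: "int p dvd (e1 * a2 - e2 * a1) - (e1 * a2' - e2 * a1')" by (simp only: mod_eq_dvd_iff)
      define y1 where "y1 = a1 - a1'"
      define y2 where "y2 = a2 - a2'"
      have gs: "gsub p q l l' = ((y1 mod int p, y2 mod int p), (0, 0))"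
        by (simp add: gsub_def ld ld' bb y1_def y2_def)
      obtain c where c: "1 \<le> c" "c < int p" "(c * e1) mod int p = y1 mod int p" "(c * e2) mod int p = y2 mod int p"
      proof -
        from dir show ?thesis
        proof
          assume e: "e1 = 0 \<and> e2 = 1"
          have "int p dvd (a1 - a1')" using dv e by (simp add: dvd_diff_commute algebra_simps)
          hence a1e: "a1 = a1'" using rg by (intro mod_dvd_range_eq) auto
          have "a2 \<noteq> a2'" using ne a1e bb ld ld' by auto
          hence "\<not> int p dvd (a2 - a2')" using rg mod_dvd_range_eq by blast
          hence c0: "y2 mod int p \<noteq> 0" by (simp add: y2_def dvd_eq_mod_eq_0)
          show ?thesis
          proof (rule that[of "y2 mod int p"])
            show "1 \<le> y2 mod int p" using c0 p0 pos_mod_sign[OF p0, of y2] by linarith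
            show "y2 mod int p < int p" using p0 by simp
            show "(y2 mod int p * e1) mod int p = y1 mod int p" using e a1e by (simp add: y1_def)
            show "(y2 mod int p * e2) mod int p = y2 mod int p" using e by simp
          qed
        next
          assume e: "e1 = 1 \<and> 0 \<le> e2 \<and> e2 < int p"
          have dv2: "int p dvd (y2 - e2 * y1)" using dv e by (simp add: y1_def y2_def algebra_simps)
          have c0: "y1 mod int p \<noteq> 0"
          proof
            assume "y1 mod int p = 0"
            hence "int p dvd (a1 - a1')" by (simp add: y1_def dvd_eq_mod_eq_0)
            hence a1e: "a1 = a1'" using rg by (intro mod_dvd_range_eq) auto
            hence "int p dvd (a2 - a2')" using dv2 by (simp add: y1_def y2_def)
            hence "a2 = a2'" using rg by (intro mod_dvd_range_eq) auto
            thus False using ne a1e bb ld ld' by auto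
          qed
          show ?thesis
          proof (rule that[of "y1 mod int p"])
            show "1 \<le> y1 mod int p" using c0 p0 pos_mod_sign[OF p0, of y1] by linarith
            show "y1 mod int p < int p" using p0 by simp
            show "(y1 mod int p * e1) mod int p = y1 mod int p" using e by simp
            have "(y1 mod int p * e2) mod int p = (e2 * y1) mod int p" by (simp add: mod_mult_right_eq mult.commute)
            also have "\<dots> = y2 mod int p" using dv2 by (simp add: mod_eq_dvd_iff dvd_diff_commute)
            finally show "(y1 mod int p * e2) mod int p = y2 mod int p" .
          qed
        qed
      qed
      have "chiS p q (gsub p q l l') S = 0" using orth l l' ne by blast
      moreover have "gsub p q l l' = (((c * e1) mod int p, (c * e2) mod int p), (0, 0))"
        using gs c by simp
      ultimately show False using nz[OF c(1) c(2)] by simp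
    qed
  qed
  have "card \<Lambda> = card (F ` \<Lambda>)" using card_image[OF inj] by simp
  also have "\<dots> \<le> card ({0..<int p} \<times> ({0..<int q} \<times> {0..<int q}))"
    by (rule card_mono[OF _ Fin]) simp
  also have "\<dots> = p * q^2" by (simp add: card_cartesian_product power2_eq_square)
  finally show ?thesis .
qed


definition sw :: "elt \<Rightarrow> elt" where "sw l = (snd l, fst l)"

lemma sw_sw [simp]: "sw (sw l) = l" by (simp add: sw_def)
lemma inj_sw: "inj sw" by (metis injI sw_sw)

lemma chi_sw: "chi q p (sw w) (sw s) = chi p q w s"
proof -
  obtain u1 u2 v1 v2 where w: "w = ((u1, u2), (v1, v2))" by (rule elt_cases)
  obtain a1 a2 b1 b2 where s: "s = ((a1, a2), (b1, b2))" by (rule elt_cases)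
  show ?thesis by (simp add: chi_def sw_def w s add.commute)
qed

lemma gsub_sw: "gsub q p (sw l) (sw l') = sw (gsub p q l l')"
proof -
  obtain u1 u2 v1 v2 where w: "l = ((u1, u2), (v1, v2))" by (rule elt_cases)
  obtain a1 a2 b1 b2 where s: "l' = ((a1, a2), (b1, b2))" by (rule elt_cases)
  show ?thesis by (simp add: gsub_def sw_def w s)
qed

lemma Gset_sw: "sw l \<in> Gset q p \<longleftrightarrow> l \<in> Gset p q"
proof -
  obtain u1 u2 v1 v2 where w: "l = ((u1, u2), (v1, v2))" by (rule elt_cases)
  show ?thesis by (auto simp: Gset_def sw_def w)
qed

lemma chiS_sw: "chiS q p (sw w) (sw ` S) = chiS p q w S"
proof -
  have "chiS q p (sw w) (sw ` S) = (\<Sum>s\<in>S. chi q p (sw w) (sw s))"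
    unfolding chiS_def by (rule sum.reindex[OF inj_on_subset[OF inj_sw subset_UNIV], unfolded comp_def])
  also have "\<dots> = chiS p q w S" unfolding chiS_def by (simp add: chi_sw)
  finally show ?thesis .
qed

lemma spectral_sw:
  assumes "spectral p q S"
  shows "spectral q p (sw ` S)"
proof -
  obtain \<Lambda> where L: "\<Lambda> \<subseteq> Gset p q" and c: "card \<Lambda> = card S"
    and o: "\<forall>l\<in>\<Lambda>. \<forall>l'\<in>\<Lambda>. l \<noteq> l' \<longrightarrow> chiS p q (gsub p q l l') S = 0"
    using assms unfolding spectral_def by blast
  have injS: "inj_on sw A" for A using inj_on_subset[OF inj_sw subset_UNIV] .
  show ?thesis unfolding spectral_def
  proof (intro exI conjI ballI impI)
    show "sw ` \<Lambda> \<subseteq> Gset q p" using L Gset_sw by blast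
    show "card (sw ` \<Lambda>) = card (sw ` S)" using c card_image[OF injS] by simp
  next
    fix l l' assume l: "l \<in> sw ` \<Lambda>" and l': "l' \<in> sw ` \<Lambda>" and ne: "l \<noteq> l'"
    obtain m where m: "m \<in> \<Lambda>" "l = sw m" using l by blast
    obtain m' where m': "m' \<in> \<Lambda>" "l' = sw m'" using l' by blast
    have "m \<noteq> m'" using ne m m' by blast
    hence "chiS p q (gsub p q m m') S = 0" using o m m' by blast
    thus "chiS q p (gsub q p l l') (sw ` S) = 0" using m m' by (simp add: gsub_sw chiS_sw)
  qed
qed

lemma not_sq_dvd:
  fixes p q N :: nat
  assumes p: "prime p" and q: "prime q" and pq: "p \<noteq> q"
    and g: "gcd N (p^2 * q^2) = p * q"
  shows "\<not> p^2 dvd N"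
proof
  assume "p^2 dvd N"
  moreover have "p^2 dvd p^2 * q^2" by simp
  ultimately have "p^2 dvd gcd N (p^2 * q^2)" by (rule gcd_greatest)
  hence "p^2 dvd p * q" by (simp only: g)
  hence "p * p dvd p * q" by (simp only: power2_eq_square)
  hence "p = 0 \<or> p dvd q" by (simp only: nat_mult_dvd_cancel_disj)
  hence "p dvd q" using prime_gt_0_nat[OF p] by simp
  thus False using p q pq primes_dvd_imp_eq by blast
qed

theorem lemma4p4:
  fixes p q :: nat and S :: "elt set"
  assumes "prime p" and "prime q" and "p \<noteq> q"
    and "S \<subseteq> Gset p q"
    and "gcd (card S) (p^2 * q^2) = p * q"
    and "card S \<ge> p * q * min p q"
  shows "\<not> spectral p q S"
proof
  assume sp: "spectral p q S"
  have p: "prime p" and q: "prime q" by fact+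
  have finS: "finite S" using assms(4) Gset_finite finite_subset by blast
  have ndp: "\<not> p^2 dvd card S" by (rule not_sq_dvd[OF p q assms(3) assms(5)])
  have g2: "gcd (card S) (q^2 * p^2) = q * p" using assms(5) by (simp add: mult.commute)
  have ndq: "\<not> q^2 dvd card S" by (rule not_sq_dvd[OF q p _ g2]) (use assms(3) in auto)
  obtain \<Lambda> where L: "\<Lambda> \<subseteq> Gset p q" and c: "card \<Lambda> = card S"
    and o: "\<forall>l\<in>\<Lambda>. \<forall>l'\<in>\<Lambda>. l \<noteq> l' \<longrightarrow> chiS p q (gsub p q l l') S = 0"
    using sp unfolding spectral_def by blast
  have b1: "card S \<le> p * q^2"
    using side_bound[OF p prime_gt_0_nat[OF q] finS ndp L o] c by simp
  have injS: "inj_on sw A" for A using inj_on_subset[OF inj_sw subset_UNIV] .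
  have cS: "card (sw ` S) = card S" by (rule card_image[OF injS])
  obtain \<Lambda>' where L': "\<Lambda>' \<subseteq> Gset q p" and c': "card \<Lambda>' = card (sw ` S)"
    and o': "\<forall>l\<in>\<Lambda>'. \<forall>l'\<in>\<Lambda>'. l \<noteq> l' \<longrightarrow> chiS q p (gsub q p l l') (sw ` S) = 0"
    using spectral_sw[OF sp] unfolding spectral_def by blast
  have ndq': "\<not> q^2 dvd card (sw ` S)" using ndq cS by simp
  have b2: "card S \<le> q * p^2"
    using side_bound[OF q prime_gt_0_nat[OF p] finite_imageI[OF finS] ndq' L' o'] c' cS by simp
  show False
  proof (cases "p \<le> q")
    case True
    hence "card S \<ge> p * q * p" using assms(6) by (simp add: min_def)
    hence "card S = p^2 * q" using b2 by (simp add: power2_eq_square mult_ac)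
    thus False using ndp by simp
  next
    case False
    hence "card S \<ge> p * q * q" using assms(6) by (simp add: min_def)
    hence "card S = q^2 * p" using b1 by (simp add: power2_eq_square mult_ac)
    thus False using ndq by simp
  qed
qed


end
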